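(* Let $n,m\ge 2$ be integers and let $P_n,P_m$ be paths on $n$ and $m$ vertices. Then $AT(P_n+_S P_m)=2$ if $n=m=2$, and $AT(P_n+_S P_m)=3$ otherwise.
   Context: For an orientation $D$, a subdigraph is Eulerian if every vertex has equal in- and outdegree in it; $D$ is an AT-orientation if the numbers of Eulerian subgraphs with an even and with an odd number of arcs differ; $AT(G)$ is the smallest $k$ such that $G$ has an AT-orientation of maximum outdegree at most $k-1$. $S(G)$ is obtained from $G$ by subdividing each edge once, with vertex set identified with $V(G)\cup E(G)$. $G+_S H$ has vertex set $(V(G)\cup E(G))\times V(H)$, with $(u_1,u_2)\sim(v_1,v_2)$ iff [$u_1=v_1\in V(G)$ and $u_2v_2\in E(H)$] or [$u_2=v_2$ and $u_1v_1\in E(S(G))$]. *)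

theory Defs
  imports Main
begin

text \<open>A (finite simple) graph is a pair (V, E) of a vertex set and a set of 2-element edges.\<close>
type_synonym 'a graph = "'a set \<times> 'a set set"

definition path_graph :: "nat \<Rightarrow> nat graph" where
  "path_graph n = ({0..<n}, {{i, Suc i} | i. Suc i < n})"

text \<open>Subdivision S(G): vertex set V(G) \<union> E(G) (as a disjoint sum), u ~ e iff u \<in> e.\<close>
definition subdiv :: "'a graph \<Rightarrow> ('a + 'a set) graph" where
  "subdiv G = (Inl ` fst G \<union> Inr ` snd G, {{Inl u, Inr e} | u e. e \<in> snd G \<and> u \<in> e})"

definition sprod :: "'a graph \<Rightarrow> 'b graph \<Rightarrow> (('a + 'a set) \<times> 'b) graph" where
  "sprod G H = (fst (subdiv G) \<times> fst H,
     {{(u1, u2), (v1, v2)} | u1 u2 v1 v2.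
        (u1 = v1 \<and> u1 \<in> Inl ` fst G \<and> {u2, v2} \<in> snd H) \<or>
        (u2 = v2 \<and> u2 \<in> fst H \<and> {u1, v1} \<in> snd (subdiv G))})"

definition is_orientation :: "'a graph \<Rightarrow> ('a \<times> 'a) set \<Rightarrow> bool" where
  "is_orientation G D \<longleftrightarrow>
     D \<subseteq> {(u, v). {u, v} \<in> snd G \<and> u \<noteq> v} \<and>
     (\<forall>u v. {u, v} \<in> snd G \<and> u \<noteq> v \<longrightarrow> ((u, v) \<in> D \<longleftrightarrow> (v, u) \<notin> D))"

definition outdeg :: "('a \<times> 'a) set \<Rightarrow> 'a \<Rightarrow> nat" where
  "outdeg D v = card {w. (v, w) \<in> D}"

definition indeg :: "('a \<times> 'a) set \<Rightarrow> 'a \<Rightarrow> nat" where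
  "indeg D v = card {w. (w, v) \<in> D}"

definition eulerian :: "'a set \<Rightarrow> ('a \<times> 'a) set \<Rightarrow> bool" where
  "eulerian V A \<longleftrightarrow> (\<forall>v\<in>V. indeg A v = outdeg A v)"

definition AT_orientation :: "'a graph \<Rightarrow> ('a \<times> 'a) set \<Rightarrow> bool" where
  "AT_orientation G D \<longleftrightarrow>
     card {A. A \<subseteq> D \<and> eulerian (fst G) A \<and> even (card A)}
     \<noteq> card {A. A \<subseteq> D \<and> eulerian (fst G) A \<and> odd (card A)}"

definition AT_number :: "'a graph \<Rightarrow> nat" where
  "AT_number G = (LEAST k. \<exists>D. is_orientation G D \<and> AT_orientation G D \<and>
                              (\<forall>v\<in>fst G. outdeg D v + 1 \<le> k))"

end

theory Submission
  imports Defs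
begin


lemma vert_char: "fst (sprod (path_graph n) (path_graph m)) =
  (Inl ` {0..<n} \<union> Inr ` {{i, Suc i} | i. Suc i < n}) \<times> {0..<m}"
  by (simp add: sprod_def subdiv_def path_graph_def)

lemma mem_sprodI: "(u1 = v1 \<and> u1 \<in> Inl ` fst G \<and> {u2,v2} \<in> snd H) \<or> (u2 = v2 \<and> u2 \<in> fst H \<and> {u1,v1} \<in> snd (subdiv G)) \<Longrightarrow> {(u1,u2),(v1,v2)} \<in> snd (sprod G H)"
  unfolding sprod_def snd_conv
  apply (rule CollectI)
  apply (rule exI)+
  apply (rule conjI[OF refl])
  apply assumption
  done

lemma edge_char: "snd (sprod (path_graph n) (path_graph m)) =
  {{(Inl i, j), (Inl i, Suc j)} | i j. i < n \<and> Suc j < m} \<union>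
  {{(Inl a, j), (Inr {i, Suc i}, j)} | a i j. Suc i < n \<and> j < m \<and> (a = i \<or> a = Suc i)}"
  (is "?L = ?R")
proof
  show "?L \<subseteq> ?R"
  proof
    fix x assume "x \<in> ?L"
    then have "\<exists>u1 u2 v1 v2. x = {(u1,u2),(v1,v2)} \<and>
      ((u1 = v1 \<and> u1 \<in> Inl ` {0..<n} \<and> {u2, v2} \<in> {{i, Suc i} | i. Suc i < m}) \<or>
        (u2 = v2 \<and> u2 \<in> {0..<m} \<and> {u1, v1} \<in> {{Inl u, Inr e} | u e. e \<in> {{i, Suc i} | i. Suc i < n} \<and> u \<in> e}))"
      unfolding sprod_def subdiv_def path_graph_def snd_conv fst_conv mem_Collect_eq by assumption
    then obtain u1 u2 v1 v2 where x: "x = {(u1,u2),(v1,v2)}" and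
      c: "(u1 = v1 \<and> u1 \<in> Inl ` {0..<n} \<and> {u2, v2} \<in> {{i, Suc i} | i. Suc i < m}) \<or>
        (u2 = v2 \<and> u2 \<in> {0..<m} \<and> {u1, v1} \<in> {{Inl u, Inr e} | u e. e \<in> {{i, Suc i} | i. Suc i < n} \<and> u \<in> e})"
      by iprover
    from c show "x \<in> ?R"
    proof
      assume h: "u1 = v1 \<and> u1 \<in> Inl ` {0..<n} \<and> {u2, v2} \<in> {{i, Suc i} | i. Suc i < m}"
      from h[THEN conjunct2, THEN conjunct1] obtain i where i: "u1 = Inl i" "i \<in> {0..<n}" by (rule imageE)
      from h[THEN conjunct2, THEN conjunct2] obtain k where k: "{u2,v2} = {k, Suc k}" "Suc k < m"
        unfolding mem_Collect_eq by iprover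
      have v1: "v1 = Inl i" using h i by simp
      from k(1) have "(u2 = k \<and> v2 = Suc k) \<or> (u2 = Suc k \<and> v2 = k)" by (simp add: doubleton_eq_iff)
      then have xe: "x = {(Inl i, k), (Inl i, Suc k)}" using x i(1) v1 by (elim disjE) (simp_all add: insert_commute)
      show ?thesis unfolding xe
        apply (rule UnI1)
        apply (rule CollectI)
        apply (rule exI[of _ i], rule exI[of _ k])
        using i k by simp
    next
      assume h: "u2 = v2 \<and> u2 \<in> {0..<m} \<and> {u1, v1} \<in> {{Inl u, Inr e} | u e. e \<in> {{i, Suc i} | i. Suc i < n} \<and> u \<in> e}"
      from h[THEN conjunct2, THEN conjunct2] obtain a e where ae: "{u1, v1} = {Inl a, Inr e}" "e \<in> {{i, Suc i} | i. Suc i < n}" "a \<in> e"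
        unfolding mem_Collect_eq by iprover
      from ae(2) obtain i where ie: "e = {i, Suc i}" "Suc i < n" unfolding mem_Collect_eq by iprover
      have u2: "v2 = u2" "u2 < m" using h by simp_all
      from ae(1) have "(u1 = Inl a \<and> v1 = Inr e) \<or> (u1 = Inr e \<and> v1 = Inl a)" by (simp add: doubleton_eq_iff)
      then have xe: "x = {(Inl a, u2), (Inr {i, Suc i}, u2)}" using x u2(1) ie(1) by (elim disjE) (simp_all add: insert_commute)
      have a: "a = i \<or> a = Suc i" using ae(3) ie(1) by simp
      show ?thesis unfolding xe
        apply (rule UnI2)
        apply (rule CollectI)
        apply (rule exI[of _ a], rule exI[of _ i], rule exI[of _ u2])
        using ie u2 a by simp
    qed
  qed
next
  show "?R \<subseteq> ?L"
  proof
    fix x assume "x \<in> ?R"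
    then show "x \<in> ?L"
    proof
      assume "x \<in> {{(Inl i, j), (Inl i, Suc j)} | i j. i < n \<and> Suc j < m}"
      then obtain i j where x: "x = {(Inl i, j), (Inl i, Suc j)}" and ij: "i < n" "Suc j < m" by blast
      have "{(Inl i, j), (Inl i, Suc j)} \<in> snd (sprod (path_graph n) (path_graph m))"
        by (rule mem_sprodI, rule disjI1) (use ij in \<open>auto simp: path_graph_def\<close>)
      then show ?thesis using x by simp
    next
      assume "x \<in> {{(Inl a, j), (Inr {i, Suc i}, j)} | a i j. Suc i < n \<and> j < m \<and> (a = i \<or> a = Suc i)}"
      then obtain a i j where x: "x = {(Inl a, j), (Inr {i, Suc i}, j)}" and aij: "Suc i < n" "j < m" "a = i \<or> a = Suc i" by blast
      have e: "{Inl a, Inr {i, Suc i}} \<in> snd (subdiv (path_graph n))"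
        unfolding subdiv_def path_graph_def snd_conv using aij by blast
      have "{(Inl a, j), (Inr {i, Suc i}, j)} \<in> snd (sprod (path_graph n) (path_graph m))"
        by (rule mem_sprodI, rule disjI2) (use e aij in \<open>auto simp: path_graph_def\<close>)
      then show ?thesis using x by simp
    qed
  qed
qed



lemma fin_out: "finite V \<Longrightarrow> A \<subseteq> V \<times> V \<Longrightarrow> finite {w. (v, w) \<in> A}"
  by (rule finite_subset[of _ V]) auto

lemma fin_in: "finite V \<Longrightarrow> A \<subseteq> V \<times> V \<Longrightarrow> finite {w. (w, v) \<in> A}"
  by (rule finite_subset[of _ V]) auto

lemma eul_step:
  assumes "finite V" "A \<subseteq> V \<times> V" "eulerian V A" "(u, v) \<in> A"
  shows "\<exists>w. (v, w) \<in> A"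
proof -
  have v: "v \<in> V" using assms by auto
  have "indeg A v > 0" unfolding indeg_def using fin_in[OF assms(1,2), of v] assms(4)
    by (auto simp: card_gt_0_iff)
  then have "outdeg A v > 0" using assms(3) v unfolding eulerian_def by auto
  then show ?thesis unfolding outdeg_def by (auto simp: card_gt_0_iff)
qed

lemma acyc:
  fixes phi :: "'a \<Rightarrow> nat"
  assumes "finite V" "A \<subseteq> V \<times> V" "\<forall>(u,v)\<in>A. phi u < phi v" "eulerian V A"
  shows "A = {}"
proof (rule ccontr)
  assume ne: "A \<noteq> {}"
  have finA: "finite A" using assms(1,2) finite_subset by blast
  define M where "M = Max ((phi \<circ> snd) ` A)"
  have "M \<in> (phi \<circ> snd) ` A" unfolding M_def using finA ne by (intro Max_in) auto
  then obtain u v where uv: "(u, v) \<in> A" "phi v = M" by auto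
  then obtain w where w: "(v, w) \<in> A" using eul_step[OF assms(1,2,4)] by blast
  then have "phi w \<le> M" unfolding M_def using finA
    by (metis Max_ge comp_apply finite_imageI image_eqI snd_conv)
  moreover have "phi v < phi w" using assms(3) w by auto
  ultimately show False using uv by simp
qed

lemma AT_if:
  assumes "\<forall>A. A \<subseteq> D \<longrightarrow> eulerian (fst G) A \<longrightarrow> A = {}"
  shows "AT_orientation G D"
proof -
  have e: "eulerian (fst G) {}" unfolding eulerian_def indeg_def outdeg_def by simp
  have 1: "{A. A \<subseteq> D \<and> eulerian (fst G) A \<and> even (card A)} = {{}}" using assms e by auto
  have 2: "{A. A \<subseteq> D \<and> eulerian (fst G) A \<and> odd (card A)} = {}" using assms by auto
  show ?thesis unfolding AT_orientation_def 1 2 by simp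
qed

lemma pigeon:
  assumes "finite V" "D \<subseteq> V \<times> V" "\<forall>v\<in>V. outdeg D v \<le> 1"
    "\<forall>e\<in>F. \<exists>a b. e = {a, b} \<and> (a, b) \<in> D" "\<Union>F \<subseteq> W" "finite W"
  shows "card F \<le> card W"
proof -
  define t where "t e = (SOME a. \<exists>b. e = {a, b} \<and> (a, b) \<in> D)" for e
  have t: "\<exists>b. e = {t e, b} \<and> (t e, b) \<in> D" if "e \<in> F" for e
  proof -
    have "\<exists>a b. e = {a, b} \<and> (a, b) \<in> D" using assms(4) that by blast
    then show ?thesis unfolding t_def by (rule someI_ex)
  qed
  have "inj_on t F"
  proof
    fix e1 e2 assume e: "e1 \<in> F" "e2 \<in> F" "t e1 = t e2"
    obtain b1 where b1: "e1 = {t e1, b1}" "(t e1, b1) \<in> D" using t e(1) by blast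
    obtain b2 where b2: "e2 = {t e2, b2}" "(t e2, b2) \<in> D" using t e(2) by blast
    have b2': "(t e1, b2) \<in> D" using b2(2) e(3) by simp
    have "t e1 \<in> V" using b1(2) assms(2) by blast
    then have c: "card {w. (t e1, w) \<in> D} \<le> Suc 0" using assms(3) unfolding outdeg_def by simp
    have fin: "finite {w. (t e1, w) \<in> D}" by (rule fin_out[OF assms(1,2)])
    have "\<forall>a1\<in>{w. (t e1, w) \<in> D}. \<forall>a2\<in>{w. (t e1, w) \<in> D}. a1 = a2"
      using card_le_Suc0_iff_eq[OF fin] c by blast
    then have "b1 = b2" using b1(2) b2' by blast
    then show "e1 = e2" using b1(1) b2(1) e(3) by simp
  qed
  moreover have "t ` F \<subseteq> W"
  proof (rule image_subsetI)
    fix e assume eF: "e \<in> F"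
    then obtain b where "e = {t e, b}" using t by blast
    then have "t e \<in> e" by (metis insertI1)
    then show "t e \<in> W" using assms(5) eF by blast
  qed
  ultimately show ?thesis using card_inj_on_le assms(6) by blast
qed

lemma orient_phi:
  fixes phi :: "'a \<Rightarrow> nat"
  assumes "D \<subseteq> {(u, v). {u, v} \<in> snd G \<and> u \<noteq> v}"
    "\<forall>u v. {u, v} \<in> snd G \<longrightarrow> u \<noteq> v \<longrightarrow> (u, v) \<in> D \<or> (v, u) \<in> D"
    "\<forall>(u,v)\<in>D. phi u < phi v"
  shows "is_orientation G D"
  unfolding is_orientation_def
proof (intro conjI allI impI assms(1))
  fix u v assume h: "{u, v} \<in> snd G \<and> u \<noteq> v"
  have "\<not> ((u, v) \<in> D \<and> (v, u) \<in> D)"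
  proof
    assume "(u, v) \<in> D \<and> (v, u) \<in> D"
    then have "phi u < phi v" "phi v < phi u" using assms(3) by auto
    then show False by simp
  qed
  then show "((u, v) \<in> D) = ((v, u) \<notin> D)" using assms(2) h by blast
qed



abbreviation GG :: "nat \<Rightarrow> nat \<Rightarrow> ((nat + nat set) \<times> nat) graph" where
  "GG n m \<equiv> sprod (path_graph n) (path_graph m)"

lemma edgeA: "i < n \<Longrightarrow> Suc j < m \<Longrightarrow> {(Inl i, j), (Inl i, Suc j)} \<in> snd (GG n m)"
  unfolding edge_char by (rule UnI1) blast

lemma edgeB: "Suc i < n \<Longrightarrow> j < m \<Longrightarrow> a = i \<or> a = Suc i \<Longrightarrow>
   {(Inl a, j), (Inr {i, Suc i}, j)} \<in> snd (GG n m)"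
  unfolding edge_char by (rule UnI2) blast

lemma pair_suc_eq[simp]: "({a, Suc a} = {b, Suc b}) = (a = (b::nat))"
  by (auto simp: doubleton_eq_iff)

lemma fin_V: "finite (fst (GG n m))"
proof -
  have "{{i, Suc i} | i. Suc i < n} = (\<lambda>i. {i, Suc i}) ` {i. Suc i < n}" by auto
  moreover have "finite {i. Suc i < n}" by (rule finite_subset[of _ "{..<n}"]) auto
  ultimately have "finite {{i, Suc i} | i. Suc i < n}" by simp
  then show ?thesis unfolding vert_char by simp
qed

lemma edges_sub: "e \<in> snd (GG n m) \<Longrightarrow> e \<subseteq> fst (GG n m)"
  unfolding vert_char edge_char by auto

lemma D_sub: "is_orientation (GG n m) D \<Longrightarrow> D \<subseteq> fst (GG n m) \<times> fst (GG n m)"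
  unfolding is_orientation_def using edges_sub by blast

lemma orient_pick: "is_orientation G D \<Longrightarrow> {a, b} \<in> snd G \<Longrightarrow> a \<noteq> b \<Longrightarrow>
   \<exists>x y. {a, b} = {x, y} \<and> (x, y) \<in> D"
  unfolding is_orientation_def by (metis insert_commute)

lemma upper: "\<exists>D. is_orientation (GG n m) D \<and> AT_orientation (GG n m) D \<and>
   (\<forall>v\<in>fst (GG n m). outdeg D v + 1 \<le> 3)"
proof -
  define D :: "(((nat + nat set) \<times> nat) \<times> ((nat + nat set) \<times> nat)) set"
    where "D = {((Inl i, j), (Inl i, Suc j)) | i j. i < n \<and> Suc j < m} \<union>
    {((Inr {i, Suc i}, j), (Inl a, j)) | a i j. Suc i < n \<and> j < m \<and> (a = i \<or> a = Suc i)}"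
  define phi :: "(nat + nat set) \<times> nat \<Rightarrow> nat" where
    "phi x = (case fst x of Inl _ \<Rightarrow> Suc (snd x) | Inr _ \<Rightarrow> 0)" for x
  have ph: "\<forall>(u,v)\<in>D. phi u < phi v" unfolding D_def phi_def by auto
  have a: "D \<subseteq> {(u, v). {u, v} \<in> snd (GG n m) \<and> u \<noteq> v}"
  proof
    fix p assume "p \<in> D"
    then consider (A) i j where "p = ((Inl i, j), (Inl i, Suc j))" "i < n" "Suc j < m"
      | (B) a i j where "p = ((Inr {i, Suc i}, j), (Inl a, j))" "Suc i < n" "j < m" "a = i \<or> a = Suc i"
      unfolding D_def Un_iff mem_Collect_eq by iprover
    then show "p \<in> {(u, v). {u, v} \<in> snd (GG n m) \<and> u \<noteq> v}"
    proof cases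
      case A
      then show ?thesis using edgeA[of i n j m] by simp
    next
      case B
      have "{(Inr {i, Suc i}, j), (Inl a, j)} = {(Inl a, j), (Inr {i, Suc i}, j)}" by (rule insert_commute)
      then show ?thesis using B edgeB[of i n j m a] by simp
    qed
  qed
  have b: "\<forall>u v. {u, v} \<in> snd (GG n m) \<longrightarrow> u \<noteq> v \<longrightarrow> (u, v) \<in> D \<or> (v, u) \<in> D"
  proof (intro allI impI)
    fix u v assume "{u, v} \<in> snd (GG n m)"
    then consider (A) i j where "{u, v} = {(Inl i, j), (Inl i, Suc j)}" "i < n" "Suc j < m"
      | (B) a i j where "{u, v} = {(Inl a, j), (Inr {i, Suc i}, j)}" "Suc i < n" "j < m" "a = i \<or> a = Suc i"
      unfolding edge_char Un_iff mem_Collect_eq by iprover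
    then show "(u, v) \<in> D \<or> (v, u) \<in> D"
    proof cases
      case A
      have "(u = (Inl i, j) \<and> v = (Inl i, Suc j)) \<or> (v = (Inl i, j) \<and> u = (Inl i, Suc j))"
        using A(1) unfolding doubleton_eq_iff by blast
      moreover have "((Inl i, j), (Inl i, Suc j)) \<in> D" unfolding D_def using A(2,3) by blast
      ultimately show ?thesis by auto
    next
      case B
      have "(u = (Inl a, j) \<and> v = (Inr {i, Suc i}, j)) \<or> (v = (Inl a, j) \<and> u = (Inr {i, Suc i}, j))"
        using B(1) unfolding doubleton_eq_iff by blast
      moreover have "((Inr {i, Suc i}, j), (Inl a, j)) \<in> D" unfolding D_def using B(2-4) by blast
      ultimately show ?thesis by auto
    qed
  qed
  have o: "is_orientation (GG n m) D" by (rule orient_phi[OF a b ph])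
  have at: "AT_orientation (GG n m) D"
  proof (rule AT_if, intro allI impI)
    fix A assume "A \<subseteq> D" "eulerian (fst (GG n m)) A"
    moreover have "A \<subseteq> fst (GG n m) \<times> fst (GG n m)" using D_sub[OF o] calculation by blast
    ultimately show "A = {}" using acyc[OF fin_V, where A=A and phi=phi] ph by blast
  qed
  have od: "outdeg D v \<le> 2" for v
  proof (cases v)
    case (Pair x j)
    show ?thesis
    proof (cases x)
      case (Inl i)
      have "{w. (v, w) \<in> D} \<subseteq> {(Inl i, Suc j)}" unfolding D_def Pair Inl by auto
      then have "card {w. (v, w) \<in> D} \<le> 1" by (metis card.empty card.insert card_mono empty_iff finite.emptyI finite.insertI One_nat_def)
      then show ?thesis unfolding outdeg_def by simp
    next
      case (Inr e)
      show ?thesis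
      proof (cases "\<exists>i. e = {i, Suc i}")
        case True
        then obtain i where e: "e = {i, Suc i}" by blast
        have "{w. (v, w) \<in> D} \<subseteq> {(Inl i, j), (Inl (Suc i), j)}"
          unfolding D_def Pair Inr e by auto
        moreover have "card {(Inl i, j), (Inl (Suc i), j) :: (nat + nat set) \<times> nat} \<le> 2"
          by (simp add: card_insert_if)
        ultimately show ?thesis unfolding outdeg_def by (meson card_mono finite.emptyI finite.insertI order_trans)
      next
        case False
        then have "{w. (v, w) \<in> D} = {}" unfolding D_def Pair Inr by auto
        then show ?thesis unfolding outdeg_def by (metis card.empty le0)
      qed
    qed
  qed
  show ?thesis using o at od by (intro exI[of _ D]) (auto simp: le_diff_conv2)
qed



lemma lower_gen:
  assumes o: "is_orientation (GG n m) D" and od: "\<forall>v\<in>fst (GG n m). outdeg D v \<le> 1"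
    and F: "F \<subseteq> snd (GG n m)" "\<forall>e\<in>F. card e = 2"
    and W: "\<Union>F \<subseteq> W" "finite W"
  shows "card F \<le> card W"
proof (rule pigeon[OF fin_V D_sub[OF o] od _ W])
  show "\<forall>e\<in>F. \<exists>a b. e = {a, b} \<and> (a, b) \<in> D"
  proof
    fix e assume e: "e \<in> F"
    then obtain a b where ab: "e = {a, b}" "a \<noteq> b" using F(2) card_2_iff by metis
    have "{a, b} \<in> snd (GG n m)" using ab(1) e F(1) by blast
    then show "\<exists>a b. e = {a, b} \<and> (a, b) \<in> D" using orient_pick[OF o _ ab(2)] ab(1) by simp
  qed
qed

lemma lower_m3:
  assumes "n \<ge> 2" "m \<ge> 3" "is_orientation (GG n m) D" "\<forall>v\<in>fst (GG n m). outdeg D v \<le> 1"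
  shows False
proof -
  define F :: "((nat + nat set) \<times> nat) set set" where "F = {{(Inl 0,0),(Inl 0,Suc 0)}, {(Inl 0,Suc 0),(Inl 0,Suc (Suc 0))}, {(Inl (Suc 0),0),(Inl (Suc 0),Suc 0)}, {(Inl (Suc 0),Suc 0),(Inl (Suc 0),Suc (Suc 0))},
    {(Inl 0,0),(Inr {0,Suc 0},0)}, {(Inl 0,Suc 0),(Inr {0,Suc 0},Suc 0)}, {(Inl 0,Suc (Suc 0)),(Inr {0,Suc 0},Suc (Suc 0))},
    {(Inl (Suc 0),0),(Inr {0,Suc 0},0)}, {(Inl (Suc 0),Suc 0),(Inr {0,Suc 0},Suc 0)}, {(Inl (Suc 0),Suc (Suc 0)),(Inr {0,Suc 0},Suc (Suc 0))}}"
  define W :: "((nat + nat set) \<times> nat) set" where "W = {Inl 0, Inl (Suc 0), Inr {0,Suc 0}} \<times> {0,Suc 0,Suc (Suc 0)}"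
  have cW: "card W = 9" unfolding W_def by simp
  have cF: "card F = 10" unfolding F_def by (simp add: doubleton_eq_iff)
  have F1: "F \<subseteq> snd (GG n m)" unfolding F_def insert_subset
    using assms(1,2) by (intro conjI empty_subsetI edgeA edgeB) simp_all
  have F2: "\<forall>e\<in>F. card e = 2" unfolding F_def by simp
  have "\<Union>F \<subseteq> W" unfolding F_def W_def by simp
  from lower_gen[OF assms(3,4) F1 F2 this] cW cF show False unfolding W_def by simp
qed



lemma lower_n3:
  assumes "n \<ge> 3" "m \<ge> 2" "is_orientation (GG n m) D" "\<forall>v\<in>fst (GG n m). outdeg D v \<le> 1"
  shows False
proof -
  define F :: "((nat + nat set) \<times> nat) set set" where "F = {{(Inl 0,0),(Inl 0,Suc 0)}, {(Inl (Suc 0),0),(Inl (Suc 0),Suc 0)}, {(Inl (Suc (Suc 0)),0),(Inl (Suc (Suc 0)),Suc 0)},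
    {(Inl 0,0),(Inr {0,Suc 0},0)}, {(Inl 0,Suc 0),(Inr {0,Suc 0},Suc 0)}, {(Inl (Suc 0),0),(Inr {0,Suc 0},0)}, {(Inl (Suc 0),Suc 0),(Inr {0,Suc 0},Suc 0)},
    {(Inl (Suc 0),0),(Inr {Suc 0,Suc (Suc 0)},0)}, {(Inl (Suc 0),Suc 0),(Inr {Suc 0,Suc (Suc 0)},Suc 0)}, {(Inl (Suc (Suc 0)),0),(Inr {Suc 0,Suc (Suc 0)},0)}, {(Inl (Suc (Suc 0)),Suc 0),(Inr {Suc 0,Suc (Suc 0)},Suc 0)}}"
  define W :: "((nat + nat set) \<times> nat) set" where "W = {Inl 0, Inl (Suc 0), Inl (Suc (Suc 0)), Inr {0,Suc 0}, Inr {Suc 0,Suc (Suc 0)}} \<times> {0,Suc 0}"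
  have cW: "card W = 10" unfolding W_def by (simp add: doubleton_eq_iff)
  have cF: "card F = 11" unfolding F_def by (simp add: doubleton_eq_iff)
  have F1: "F \<subseteq> snd (GG n m)" unfolding F_def insert_subset
    using assms(1,2) by (intro conjI empty_subsetI edgeA edgeB) simp_all
  have F2: "\<forall>e\<in>F. card e = 2" unfolding F_def by simp
  have "\<Union>F \<subseteq> W" unfolding F_def W_def by simp
  from lower_gen[OF assms(3,4) F1 F2 this] cW cF show False unfolding W_def by simp
qed

lemma lower1:
  assumes "n \<ge> 2" "m \<ge> 2" "is_orientation (GG n m) D" "\<forall>v\<in>fst (GG n m). outdeg D v = 0"
  shows False
proof -
  have "{(Inl 0, 0), (Inl 0, Suc 0)} \<in> snd (GG n m)" using assms(1,2) by (intro edgeA) simp_all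
  then obtain x y where xy: "(x, y) \<in> D" using orient_pick[OF assms(3)] by fastforce
  have x: "x \<in> fst (GG n m)" using D_sub[OF assms(3)] xy by blast
  have "finite {w. (x, w) \<in> D}" by (rule fin_out[OF fin_V D_sub[OF assms(3)]])
  moreover have "y \<in> {w. (x, w) \<in> D}" using xy by simp
  ultimately have "card {w. (x, w) \<in> D} > 0" using card_gt_0_iff by blast
  then show False using assms(4) x unfolding outdeg_def by simp
qed

lemma orient_gen:
  assumes "D \<subseteq> {(u, v). {u, v} \<in> snd G \<and> u \<noteq> v}"
    "\<forall>u v. {u, v} \<in> snd G \<longrightarrow> u \<noteq> v \<longrightarrow> (u, v) \<in> D \<or> (v, u) \<in> D"
    "\<forall>u v. (u, v) \<in> D \<longrightarrow> (v, u) \<notin> D"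
  shows "is_orientation G D"
  unfolding is_orientation_def using assms by blast

lemma case22: "\<exists>D. is_orientation (GG 2 2) D \<and> AT_orientation (GG 2 2) D \<and>
   (\<forall>v\<in>fst (GG 2 2). outdeg D v + 1 \<le> 2)"
proof -
  define D :: "(((nat + nat set) \<times> nat) \<times> ((nat + nat set) \<times> nat)) set" where
    "D = {((Inl 0, 0), (Inl 0, Suc 0)), ((Inl 0, Suc 0), (Inr {0, Suc 0}, Suc 0)), ((Inr {0, Suc 0}, Suc 0), (Inl (Suc 0), Suc 0)), ((Inl (Suc 0), Suc 0), (Inl (Suc 0), 0)), ((Inl (Suc 0), 0), (Inr {0, Suc 0}, 0)), ((Inr {0, Suc 0}, 0), (Inl 0, 0))}"
  have n2: "{0..<2::nat} = {0, Suc 0}" by auto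
  have p2: "{{i, Suc i} | i. Suc i < (2::nat)} = {{0, Suc 0}}" by auto
  have V: "fst (GG 2 2) = {Inl 0, Inl (Suc 0), Inr {0, Suc 0}} \<times> {0, Suc 0}"
    unfolding vert_char n2 p2 by auto
  have o_a0: "{w. ((Inl 0, 0), w) \<in> D} = {(Inl 0, Suc 0)}" unfolding D_def by auto
  have i_a1: "{w. (w, (Inl 0, Suc 0)) \<in> D} = {(Inl 0, 0)}" unfolding D_def by auto
  have o_a1: "{w. ((Inl 0, Suc 0), w) \<in> D} = {(Inr {0, Suc 0}, Suc 0)}" unfolding D_def by auto
  have i_e1: "{w. (w, (Inr {0, Suc 0}, Suc 0)) \<in> D} = {(Inl 0, Suc 0)}" unfolding D_def by auto
  have o_e1: "{w. ((Inr {0, Suc 0}, Suc 0), w) \<in> D} = {(Inl (Suc 0), Suc 0)}" unfolding D_def by auto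
  have i_b1: "{w. (w, (Inl (Suc 0), Suc 0)) \<in> D} = {(Inr {0, Suc 0}, Suc 0)}" unfolding D_def by auto
  have o_b1: "{w. ((Inl (Suc 0), Suc 0), w) \<in> D} = {(Inl (Suc 0), 0)}" unfolding D_def by auto
  have i_b0: "{w. (w, (Inl (Suc 0), 0)) \<in> D} = {(Inl (Suc 0), Suc 0)}" unfolding D_def by auto
  have o_b0: "{w. ((Inl (Suc 0), 0), w) \<in> D} = {(Inr {0, Suc 0}, 0)}" unfolding D_def by auto
  have i_e0: "{w. (w, (Inr {0, Suc 0}, 0)) \<in> D} = {(Inl (Suc 0), 0)}" unfolding D_def by auto
  have o_e0: "{w. ((Inr {0, Suc 0}, 0), w) \<in> D} = {(Inl 0, 0)}" unfolding D_def by auto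
  have i_a0: "{w. (w, (Inl 0, 0)) \<in> D} = {(Inr {0, Suc 0}, 0)}" unfolding D_def by auto

  have a: "D \<subseteq> {(u, v). {u, v} \<in> snd (GG 2 2) \<and> u \<noteq> v}"
  proof -
    have 1: "{(Inl 0, 0), (Inl 0, Suc 0)} \<in> snd (GG 2 2)" by (intro edgeA) simp_all
    have 2: "{(Inl (Suc 0), 0), (Inl (Suc 0), Suc 0)} \<in> snd (GG 2 2)" by (intro edgeA) simp_all
    have 3: "{(Inl 0, j), (Inr {0, Suc 0}, j)} \<in> snd (GG 2 2)" if "j < 2" for j using that by (intro edgeB) simp_all
    have 4: "{(Inl (Suc 0), j), (Inr {0, Suc 0}, j)} \<in> snd (GG 2 2)" if "j < 2" for j using that by (intro edgeB) simp_all
    show ?thesis unfolding D_def using 1 2 3[of 0] 3[of 1] 4[of 0] 4[of 1] by (simp add: insert_commute)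
  qed
  have b: "\<forall>u v. {u, v} \<in> snd (GG 2 2) \<longrightarrow> u \<noteq> v \<longrightarrow> (u, v) \<in> D \<or> (v, u) \<in> D"
  proof (intro allI impI)
    fix u v assume "{u, v} \<in> snd (GG 2 2)"
    then consider (A) i j where "{u, v} = {(Inl i, j), (Inl i, Suc j)}" "i < 2" "Suc j < 2"
      | (B) a i j where "{u, v} = {(Inl a, j), (Inr {i, Suc i}, j)}" "Suc i < 2" "j < 2" "a = i \<or> a = Suc i"
      unfolding edge_char Un_iff mem_Collect_eq by iprover
    then show "(u, v) \<in> D \<or> (v, u) \<in> D"
    proof cases
      case A
      have uv: "(u = (Inl i, j) \<and> v = (Inl i, Suc j)) \<or> (v = (Inl i, j) \<and> u = (Inl i, Suc j))"
        using A(1) unfolding doubleton_eq_iff by blast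
      have "i = 0 \<or> i = Suc 0" "j = 0" using A(2,3) by auto
      then show ?thesis using uv unfolding D_def by auto
    next
      case B
      have uv: "(u = (Inl a, j) \<and> v = (Inr {i, Suc i}, j)) \<or> (v = (Inl a, j) \<and> u = (Inr {i, Suc i}, j))"
        using B(1) unfolding doubleton_eq_iff by blast
      have "i = 0" "j = 0 \<or> j = Suc 0" "a = 0 \<or> a = Suc 0" using B(2-4) by auto
      then show ?thesis using uv unfolding D_def by auto
    qed
  qed
  have c: "\<forall>u v. (u, v) \<in> D \<longrightarrow> (v, u) \<notin> D" unfolding D_def by simp
  have o: "is_orientation (GG 2 2) D" by (rule orient_gen[OF a b c])
  have od: "outdeg D v = 1" if "v \<in> fst (GG 2 2)" for v
    using that unfolding outdeg_def V by (auto simp: o_a0 o_a1 o_e1 o_b1 o_b0 o_e0)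
  have id: "indeg D v = 1" if "v \<in> fst (GG 2 2)" for v
    using that unfolding indeg_def V by (auto simp: i_a1 i_e1 i_b1 i_b0 i_e0 i_a0)
  have eD: "eulerian (fst (GG 2 2)) D" unfolding eulerian_def using od id by simp
  have cD: "card D = 6" unfolding D_def by simp
  have cyc: "A = {} \<or> A = D" if "A \<subseteq> D" "eulerian (fst (GG 2 2)) A" for A
  proof -
    have AV: "A \<subseteq> fst (GG 2 2) \<times> fst (GG 2 2)" using that(1) D_sub[OF o] by blast
    have step: "(v, z) \<in> A" if uv: "(u, v) \<in> A" and vz: "{w. (v, w) \<in> D} = {z}" for u v z
    proof -
      obtain w where w: "(v, w) \<in> A" using eul_step[OF fin_V AV \<open>eulerian (fst (GG 2 2)) A\<close> uv] by blast
      then have "w \<in> {w. (v, w) \<in> D}" using \<open>A \<subseteq> D\<close> by blast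
      then have "w = z" using vz by simp
      then show ?thesis using w by simp
    qed
    have all: "D \<subseteq> A" if "a \<in> A" for a
    proof -
      have a: "a \<in> D" using that \<open>A \<subseteq> D\<close> by blast
      have s0: "((Inl 0, Suc 0), (Inr {0, Suc 0}, Suc 0)) \<in> A" if "((Inl 0, 0), (Inl 0, Suc 0)) \<in> A"
        by (rule step[OF that]) (use o_a1 in blast)
      have s1: "((Inr {0, Suc 0}, Suc 0), (Inl (Suc 0), Suc 0)) \<in> A" if "((Inl 0, Suc 0), (Inr {0, Suc 0}, Suc 0)) \<in> A"
        by (rule step[OF that]) (use o_e1 in blast)
      have s2: "((Inl (Suc 0), Suc 0), (Inl (Suc 0), 0)) \<in> A" if "((Inr {0, Suc 0}, Suc 0), (Inl (Suc 0), Suc 0)) \<in> A"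
        by (rule step[OF that]) (use o_b1 in blast)
      have s3: "((Inl (Suc 0), 0), (Inr {0, Suc 0}, 0)) \<in> A" if "((Inl (Suc 0), Suc 0), (Inl (Suc 0), 0)) \<in> A"
        by (rule step[OF that]) (use o_b0 in blast)
      have s4: "((Inr {0, Suc 0}, 0), (Inl 0, 0)) \<in> A" if "((Inl (Suc 0), 0), (Inr {0, Suc 0}, 0)) \<in> A"
        by (rule step[OF that]) (use o_e0 in blast)
      have s5: "((Inl 0, 0), (Inl 0, Suc 0)) \<in> A" if "((Inr {0, Suc 0}, 0), (Inl 0, 0)) \<in> A"
        by (rule step[OF that]) (use o_a0 in blast)

      from a that show ?thesis unfolding D_def using s0 s1 s2 s3 s4 s5 by auto
    qed
    show ?thesis using all that(1) by blast
  qed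
  have e0: "eulerian (fst (GG 2 2)) {}" unfolding eulerian_def indeg_def outdeg_def by simp
  have 1: "{A. A \<subseteq> D \<and> eulerian (fst (GG 2 2)) A \<and> even (card A)} = {{}, D}"
    using cyc eD e0 cD by auto
  have n2: "\<not> (A \<subseteq> D \<and> eulerian (fst (GG 2 2)) A \<and> odd (card A))" for A
  proof
    assume h: "A \<subseteq> D \<and> eulerian (fst (GG 2 2)) A \<and> odd (card A)"
    then have "A = {} \<or> A = D" using cyc by blast
    then show False using h cD by auto
  qed
  have 2: "{A. A \<subseteq> D \<and> eulerian (fst (GG 2 2)) A \<and> odd (card A)} = {}"
    using n2 by blast
  have "D \<noteq> {}" unfolding D_def by simp
  then have at: "AT_orientation (GG 2 2) D" unfolding AT_orientation_def 1 2 by simp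
  show ?thesis using o at od by (intro exI[of _ D]) auto
qed


theorem corollary3p3:
  fixes n m :: nat
  assumes "n \<ge> 2" and "m \<ge> 2"
  shows "AT_number (sprod (path_graph n) (path_graph m)) = (if n = 2 \<and> m = 2 then 2 else 3)"
proof (cases "n = 2 \<and> m = 2")
  case True
  have "AT_number (GG n m) = 2" unfolding AT_number_def
  proof (rule Least_equality)
    show "\<exists>D. is_orientation (GG n m) D \<and> AT_orientation (GG n m) D \<and> (\<forall>v\<in>fst (GG n m). outdeg D v + 1 \<le> 2)"
      using case22 True by simp
  next
    fix y assume "\<exists>D. is_orientation (GG n m) D \<and> AT_orientation (GG n m) D \<and> (\<forall>v\<in>fst (GG n m). outdeg D v + 1 \<le> y)"
    then obtain D where D: "is_orientation (GG n m) D" "\<forall>v\<in>fst (GG n m). outdeg D v + 1 \<le> y" by blast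
    show "2 \<le> y"
    proof (rule ccontr)
      assume "\<not> 2 \<le> y"
      then have "\<forall>v\<in>fst (GG n m). outdeg D v = 0" using D(2) by fastforce
      then show False using lower1[OF assms D(1)] by blast
    qed
  qed
  then show ?thesis using True by simp
next
  case False
  have "AT_number (GG n m) = 3" unfolding AT_number_def
  proof (rule Least_equality)
    show "\<exists>D. is_orientation (GG n m) D \<and> AT_orientation (GG n m) D \<and> (\<forall>v\<in>fst (GG n m). outdeg D v + 1 \<le> 3)"
      using upper by simp
  next
    fix y assume "\<exists>D. is_orientation (GG n m) D \<and> AT_orientation (GG n m) D \<and> (\<forall>v\<in>fst (GG n m). outdeg D v + 1 \<le> y)"
    then obtain D where D: "is_orientation (GG n m) D" "\<forall>v\<in>fst (GG n m). outdeg D v + 1 \<le> y" by blast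
    show "3 \<le> y"
    proof (rule ccontr)
      assume "\<not> 3 \<le> y"
      then have od: "\<forall>v\<in>fst (GG n m). outdeg D v \<le> 1" using D(2) by fastforce
      show False
      proof (cases "m \<ge> 3")
        case True
        then show False using lower_m3[OF assms(1) True D(1) od] by blast
      next
        case f: False
        then have "n \<ge> 3" using False assms by auto
        then show False using lower_n3[OF _ assms(2) D(1) od] by blast
      qed
    qed
  qed
  then show ?thesis using False by simp
qed


end
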